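(* Let $Q_1,Q_2\in\{0,1\}^{3\times3}$ with $\mathrm{supp}(Q_1)=\{(1,2),(2,1),(3,3)\}$ and $\mathrm{supp}(Q_2)=\{(1,2),(2,3),(3,1)\}$. The class $\mathrm{Av}(\{Q_1,Q_2\})=\mathrm{Av}(Q_1)\cap\mathrm{Av}(Q_2)$ is bounded.
   Context: All matrices are binary; rows numbered top to bottom, columns left to right; $(i,j)$ is the entry in row $i$, column $j$; $\mathrm{supp}$ is the set of 1-entries; $(a,b]=\{a+1,\dots,b\}$. A pattern $P\in\{0,1\}^{k\times\ell}$ is an interval minor of $M\in\{0,1\}^{m\times n}$ if there are integers $0=r_0<\dots<r_k=m$ and $0=c_0<\dots<c_\ell=n$ such that for each 1-entry $(i,j)$ of $P$ the submatrix of $M$ on rows $(r_{i-1},r_i]$ and columns $(c_{j-1},c_j]$ contains a 1-entry; otherwise $M$ avoids $P$. For a set $\mathcal F$ of patterns, $\mathrm{Av}(\mathcal F)$ is the set of binary matrices avoiding every pattern of $\mathcal F$. $M\in\mathcal C$ is critical for $\mathcal C$ if changing any single 0-entry of $M$ into a 1-entry yields a matrix not in $\mathcal C$. A 0-run is a maximal set of consecutive 0-entries within a single row or a single column; the complexity of a line is the number of 0-runs in it. $\mathcal C$ is bounded if the supremum over all matrices critical for $\mathcal C$ of the maximum complexity of any of their lines (rows and columns) is finite. *)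

theory Defs
  imports Main
begin

text \<open>A binary matrix is represented as a triple (m, n, S): m rows, n columns,
  and S = set of 1-entries, a subset of {1..m} x {1..n} (1-indexed, row first).\<close>

type_synonym bmat = "nat \<times> nat \<times> (nat \<times> nat) set"

definition nrows :: "bmat \<Rightarrow> nat" where "nrows M = fst M"
definition ncols :: "bmat \<Rightarrow> nat" where "ncols M = fst (snd M)"
definition supp :: "bmat \<Rightarrow> (nat \<times> nat) set" where "supp M = snd (snd M)"

definition wf_bmat :: "bmat \<Rightarrow> bool" where
  "wf_bmat M \<longleftrightarrow> supp M \<subseteq> {1..nrows M} \<times> {1..ncols M}"

definition interval_minor :: "bmat \<Rightarrow> bmat \<Rightarrow> bool" where
  "interval_minor P M \<longleftrightarrow>
     (\<exists>r c :: nat \<Rightarrow> nat.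
        r 0 = 0 \<and> r (nrows P) = nrows M \<and> (\<forall>i < nrows P. r i < r (Suc i)) \<and>
        c 0 = 0 \<and> c (ncols P) = ncols M \<and> (\<forall>j < ncols P. c j < c (Suc j)) \<and>
        (\<forall>(i, j) \<in> supp P. \<exists>(a, b) \<in> supp M.
            r (i - 1) < a \<and> a \<le> r i \<and> c (j - 1) < b \<and> b \<le> c j))"

definition Av :: "bmat set \<Rightarrow> bmat set" where
  "Av F = {M. wf_bmat M \<and> (\<forall>P \<in> F. \<not> interval_minor P M)}"

definition critical :: "bmat set \<Rightarrow> bmat \<Rightarrow> bool" where
  "critical C M \<longleftrightarrow> M \<in> C \<and>
     (\<forall>i \<in> {1..nrows M}. \<forall>j \<in> {1..ncols M}. (i, j) \<notin> supp M \<longrightarrow>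
        (nrows M, ncols M, insert (i, j) (supp M)) \<notin> C)"

text \<open>Number of 0-runs (maximal runs of consecutive 0-entries) in row i / column j:
  count positions that are 0 and begin a run.\<close>
definition row_complexity :: "bmat \<Rightarrow> nat \<Rightarrow> nat" where
  "row_complexity M i = card {j \<in> {1..ncols M}. (i, j) \<notin> supp M \<and>
                              (j = 1 \<or> (i, j - 1) \<in> supp M)}"

definition col_complexity :: "bmat \<Rightarrow> nat \<Rightarrow> nat" where
  "col_complexity M j = card {i \<in> {1..nrows M}. (i, j) \<notin> supp M \<and>
                              (i = 1 \<or> (i - 1, j) \<in> supp M)}"

definition bounded_class :: "bmat set \<Rightarrow> bool" where
  "bounded_class C \<longleftrightarrow> (\<exists>B :: nat. \<forall>M. critical C M \<longrightarrow>
      (\<forall>i \<in> {1..nrows M}. row_complexity M i \<le> B) \<and>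
      (\<forall>j \<in> {1..ncols M}. col_complexity M j \<le> B))"

definition Q1 :: bmat where "Q1 = (3, 3, {(1,2), (2,1), (3,3)})"
definition Q2 :: bmat where "Q2 = (3, 3, {(1,2), (2,3), (3,1)})"

end

theory Submission imports Defs begin

definition tri :: "(nat\<times>nat) set \<Rightarrow> bool" where
 "tri S \<longleftrightarrow> (\<exists>a b a1 b1 a2 b2. (a,b)\<in>S \<and> (a1,b1)\<in>S \<and> (a2,b2)\<in>S \<and> a<a1 \<and> a<a2 \<and> b1<b \<and> b<b2 \<and> a1\<noteq>a2)"

lemma minor_Q1_tri:
  assumes "interval_minor Q1 (m,n,S)" shows "tri S"
proof -
  from assms obtain r c where
    H: "\<forall>(i,j)\<in>{(1::nat,2::nat),(2,1),(3,3)}. \<exists>(a,b)\<in>S. r (i-1) < a \<and> a \<le> r i \<and> c (j-1) < b \<and> b \<le> c j"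
    unfolding interval_minor_def Q1_def nrows_def ncols_def supp_def by auto
  from H obtain a b where 1: "(a,b)\<in>S" "a \<le> r 1" "c 1 < b" "b \<le> c 2" by fastforce
  from H obtain a1 b1 where 2: "(a1,b1)\<in>S" "r 1 < a1" "a1 \<le> r 2" "b1 \<le> c 1" by fastforce
  from H obtain a2 b2 where 3: "(a2,b2)\<in>S" "r 2 < a2" "c 2 < b2" by (fastforce simp: numeral_eq_Suc)
  show ?thesis unfolding tri_def using 1 2 3
    by (intro exI[of _ a] exI[of _ b] exI[of _ a1] exI[of _ b1] exI[of _ a2] exI[of _ b2]) auto
qed

lemma minor_Q2_tri:
  assumes "interval_minor Q2 (m,n,S)" shows "tri S"
proof -
  from assms obtain r c where
    H: "\<forall>(i,j)\<in>{(1::nat,2::nat),(2,3),(3,1)}. \<exists>(a,b)\<in>S. r (i-1) < a \<and> a \<le> r i \<and> c (j-1) < b \<and> b \<le> c j"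
    unfolding interval_minor_def Q2_def nrows_def ncols_def supp_def by auto
  from H obtain a b where 1: "(a,b)\<in>S" "a \<le> r 1" "c 1 < b" "b \<le> c 2" by fastforce
  from H obtain a1 b1 where 2: "(a1,b1)\<in>S" "r 2 < a1" "b1 \<le> c 1" by (fastforce simp: numeral_eq_Suc)
  from H obtain a2 b2 where 3: "(a2,b2)\<in>S" "r 1 < a2" "a2 \<le> r 2" "c 2 < b2" by (fastforce simp: numeral_eq_Suc)
  show ?thesis unfolding tri_def using 1 2 3
    by (intro exI[of _ a] exI[of _ b] exI[of _ a1] exI[of _ b1] exI[of _ a2] exI[of _ b2]) auto
qed

lemma tri_minor:
  assumes wf: "wf_bmat (m,n,S)" and t: "tri S"
  shows "interval_minor Q1 (m,n,S) \<or> interval_minor Q2 (m,n,S)"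
proof -
  from t obtain a b a1 b1 a2 b2 where P: "(a,b)\<in>S" "(a1,b1)\<in>S" "(a2,b2)\<in>S" "a<a1" "a<a2" "b1<b" "b<b2" "a1\<noteq>a2"
    unfolding tri_def by blast
  have S: "S \<subseteq> {1..m}\<times>{1..n}" using wf unfolding wf_bmat_def supp_def nrows_def ncols_def by simp
  have bd: "a1 \<le> m" "a2 \<le> m" "b2 \<le> n" "1 \<le> b1" "1 \<le> a" using P S by auto
  define c where "c = (\<lambda>k::nat. if k=0 then 0 else if k=1 then b1 else if k=2 then b else n)"
  have c: "c 0 = 0" "c 1 = b1" "c 2 = b" "c 3 = n" by (simp_all add: c_def)
  have cm: "\<forall>j<3. c j < c (Suc j)" using bd P by (auto simp: c_def less_Suc_eq numeral_eq_Suc)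
  show ?thesis
  proof (cases "a1 < a2")
    case True
    define r where "r = (\<lambda>k::nat. if k=0 then 0 else if k=1 then a else if k=2 then a1 else m)"
    have r: "r 0 = 0" "r 1 = a" "r 2 = a1" "r 3 = m" by (simp_all add: r_def)
    have rm: "\<forall>i<3. r i < r (Suc i)" using bd P True by (auto simp: r_def less_Suc_eq numeral_eq_Suc)
    have W1: "\<exists>(x,y)\<in>S. r 0 < x \<and> x \<le> r 1 \<and> c 1 < y \<and> y \<le> c 2"
      using P r c bd by (intro bexI[of _ "(a,b)"]) auto
    have W2: "\<exists>(x,y)\<in>S. r 1 < x \<and> x \<le> r 2 \<and> c 0 < y \<and> y \<le> c 1"
      using P r c bd by (intro bexI[of _ "(a1,b1)"]) auto
    have W3: "\<exists>(x,y)\<in>S. r 2 < x \<and> x \<le> r 3 \<and> c 2 < y \<and> y \<le> c 3"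
      using P r c bd True by (intro bexI[of _ "(a2,b2)"]) auto
    have W: "\<forall>(i,j)\<in>{(1::nat,2::nat),(2,1),(3,3)}. \<exists>(x,y)\<in>S. r (i-1) < x \<and> x \<le> r i \<and> c (j-1) < y \<and> y \<le> c j"
      using W1 W2 W3 by simp
    have "interval_minor Q1 (m,n,S)"
      unfolding interval_minor_def Q1_def nrows_def ncols_def supp_def
      apply (rule exI[of _ r], rule exI[of _ c]) using r c rm cm W by simp
    then show ?thesis by simp
  next
    case False
    then have F: "a2 < a1" using P by simp
    define r where "r = (\<lambda>k::nat. if k=0 then 0 else if k=1 then a else if k=2 then a2 else m)"
    have r: "r 0 = 0" "r 1 = a" "r 2 = a2" "r 3 = m" by (simp_all add: r_def)
    have rm: "\<forall>i<3. r i < r (Suc i)" using bd P F by (auto simp: r_def less_Suc_eq numeral_eq_Suc)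
    have W1: "\<exists>(x,y)\<in>S. r 0 < x \<and> x \<le> r 1 \<and> c 1 < y \<and> y \<le> c 2"
      using P r c bd by (intro bexI[of _ "(a,b)"]) auto
    have W2: "\<exists>(x,y)\<in>S. r 1 < x \<and> x \<le> r 2 \<and> c 2 < y \<and> y \<le> c 3"
      using P r c bd by (intro bexI[of _ "(a2,b2)"]) auto
    have W3: "\<exists>(x,y)\<in>S. r 2 < x \<and> x \<le> r 3 \<and> c 0 < y \<and> y \<le> c 1"
      using P r c bd F by (intro bexI[of _ "(a1,b1)"]) auto
    have W: "\<forall>(i,j)\<in>{(1::nat,2::nat),(2,3),(3,1)}. \<exists>(x,y)\<in>S. r (i-1) < x \<and> x \<le> r i \<and> c (j-1) < y \<and> y \<le> c j"
      using W1 W2 W3 by simp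
    have "interval_minor Q2 (m,n,S)"
      unfolding interval_minor_def Q2_def nrows_def ncols_def supp_def
      apply (rule exI[of _ r], rule exI[of _ c]) using r c rm cm W by simp
    then show ?thesis by simp
  qed
qed

lemma Av_iff: "(m,n,S) \<in> Av {Q1,Q2} \<longleftrightarrow> wf_bmat (m,n,S) \<and> \<not> tri S"
  unfolding Av_def using minor_Q1_tri minor_Q2_tri tri_minor by blast


lemma nt_elim:
  assumes "\<not> tri S" "(a,b)\<in>S" "(a1,b1)\<in>S" "(a2,b2)\<in>S" "a<a1" "a<a2" "b1<b" "b<b2" "a1\<noteq>a2"
  shows False
  using assms unfolding tri_def by blast

lemma tri_insertE:
  assumes "tri (insert p S)"
  obtains a b a1 b1 a2 b2 where
    "(a,b)\<in>insert p S" "(a1,b1)\<in>insert p S" "(a2,b2)\<in>insert p S"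
    "a<a1" "a<a2" "b1<b" "b<b2" "a1\<noteq>a2"
  using assms unfolding tri_def by blast

lemma row_caseB:
  assumes nt: "\<not> tri S" and q: "(i,c)\<in>S" and t: "tri (insert (i,c+1) S)"
    and w: "(i,c')\<in>S" "c<c'"
  shows "\<exists>a1 a2 b2. (a1,c)\<in>S \<and> i<a1 \<and> (a2,b2)\<in>S \<and> i<a2 \<and> c+1<b2 \<and> a1\<noteq>a2"
proof -
  obtain a b a1 b1 a2 b2 where X: "(a,b)\<in>insert (i,c+1) S" "(a1,b1)\<in>insert (i,c+1) S" "(a2,b2)\<in>insert (i,c+1) S"
    and o: "a<a1" "a<a2" "b1<b" "b<b2" "a1\<noteq>a2"
    using t by (rule tri_insertE)
  consider "(a,b) = (i,c+1)" | "(a1,b1) = (i,c+1)" | "(a2,b2) = (i,c+1)"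
    | "(a,b)\<in>S" "(a1,b1)\<in>S" "(a2,b2)\<in>S" using X by auto
  then show ?thesis
  proof cases
    case 1
    then have y: "(a1,b1)\<in>S" and z: "(a2,b2)\<in>S" using X o by auto
    show ?thesis
    proof (cases "b1 < c")
      case True
      then show ?thesis using nt_elim[OF nt q y z] 1 o by auto
    next
      case False
      then have "b1 = c" using 1 o by auto
      then show ?thesis using y z 1 o by auto
    qed
  next
    case 2
    then have x: "(a,b)\<in>S" and z: "(a2,b2)\<in>S" using X o by auto
    show ?thesis using nt_elim[OF nt x q z] 2 o by auto
  next
    case 3
    then have x: "(a,b)\<in>S" and y: "(a1,b1)\<in>S" using X o by auto
    show ?thesis
    proof (cases "b < c")
      case True
      then show ?thesis using nt_elim[OF nt x y q] 3 o by auto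
    next
      case False
      then have "b = c" using 3 o by auto
      then show ?thesis using nt_elim[OF nt x y w(1)] 3 o w by auto
    qed
  next
    case 4
    then show ?thesis using nt_elim[OF nt] o by blast
  qed
qed

lemma row_three:
  assumes nt: "\<not> tri S" and "c1 < c2" "c2 < c3" and m: "(i,c2)\<in>S"
    and B1: "\<exists>a1 a2 b2. (a1,c1)\<in>S \<and> i<a1 \<and> (a2,b2)\<in>S \<and> i<a2 \<and> c1+1<b2 \<and> a1\<noteq>a2"
    and B3: "\<exists>a1 a2 b2. (a1,c3)\<in>S \<and> i<a1 \<and> (a2,b2)\<in>S \<and> i<a2 \<and> c3+1<b2 \<and> a1\<noteq>a2"
  shows False
proof -
  obtain r1 where r1: "(r1,c1)\<in>S" "i<r1" using B1 by blast
  obtain r3 s3 e3 where r3: "(r3,c3)\<in>S" "i<r3" "(s3,e3)\<in>S" "i<s3" "c3+1<e3" "r3\<noteq>s3" using B3 by blast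
  have "r1 = r3" using nt_elim[OF nt m r1(1) r3(1)] r1 r3 assms by force
  moreover have "r1 = s3" using nt_elim[OF nt m r1(1) r3(3)] r1 r3 assms by force
  ultimately show False using r3 by simp
qed

lemma col_no:
  assumes nt: "\<not> tri S" and q: "(i-1,j)\<in>S" and i: "1 \<le> i" and t: "tri (insert (i,j) S)"
    and u: "(u1,j)\<in>S" "(u2,j)\<in>S" "i<u1" "i<u2" "u1\<noteq>u2"
  shows False
proof -
  obtain a b a1 b1 a2 b2 where X: "(a,b)\<in>insert (i,j) S" "(a1,b1)\<in>insert (i,j) S" "(a2,b2)\<in>insert (i,j) S"
    and o: "a<a1" "a<a2" "b1<b" "b<b2" "a1\<noteq>a2"
    using t by (rule tri_insertE)
  consider "(a,b) = (i,j)" | "(a1,b1) = (i,j)" | "(a2,b2) = (i,j)"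
    | "(a,b)\<in>S" "(a1,b1)\<in>S" "(a2,b2)\<in>S" using X by auto
  then show ?thesis
  proof cases
    case 1
    then have y: "(a1,b1)\<in>S" and z: "(a2,b2)\<in>S" using X o by auto
    have "i-1 < a1" "i-1 < a2" using 1 o by auto
    then show ?thesis using nt_elim[OF nt q y z] 1 o by auto
  next
    case 2
    then have x: "(a,b)\<in>S" and z: "(a2,b2)\<in>S" using X o by auto
    show ?thesis
    proof (cases "a2 = u1")
      case True
      then show ?thesis using nt_elim[OF nt x u(2) z] 2 o u by auto
    next
      case False
      then show ?thesis using nt_elim[OF nt x u(1) z] 2 o u by auto
    qed
  next
    case 3
    then have x: "(a,b)\<in>S" and y: "(a1,b1)\<in>S" using X o by auto
    show ?thesis
    proof (cases "a1 = u1")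
      case True
      then show ?thesis using nt_elim[OF nt x y u(2)] 3 o u by auto
    next
      case False
      then show ?thesis using nt_elim[OF nt x y u(1)] 3 o u by auto
    qed
  next
    case 4
    then show ?thesis using nt_elim[OF nt] o by blast
  qed
qed

lemma sorted_elems:
  fixes A :: "nat set"
  assumes "finite A" "k \<le> card A"
  obtains xs where "sorted_wrt (<) xs" "set xs = A" "length xs = card A"
proof -
  obtain xs where xs: "sorted_wrt (<) xs" "set xs = A"
    using ex1_sorted_list_for_set_if_finite[OF assms(1)] by blast
  have "distinct xs" using xs(1) by (simp add: strict_sorted_iff)
  then have "length xs = card A" using xs(2) distinct_card by fastforce
  then show ?thesis using that xs by blast
qed

lemma four_elems:
  fixes A :: "nat set"
  assumes "finite A" "4 \<le> card A"
  shows "\<exists>a b c d. a\<in>A \<and> b\<in>A \<and> c\<in>A \<and> d\<in>A \<and> a<b \<and> b<c \<and> c<d"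
proof -
  obtain xs where xs: "sorted_wrt (<) xs" "set xs = A" "length xs = card A"
    using sorted_elems[OF assms] by blast
  have L: "4 \<le> length xs" using xs assms by simp
  show ?thesis
    apply (rule exI[of _ "xs!0"], rule exI[of _ "xs!1"], rule exI[of _ "xs!2"], rule exI[of _ "xs!3"])
    using L xs by (auto simp: sorted_wrt_nth_less)
qed

lemma three_elems:
  fixes A :: "nat set"
  assumes "finite A" "3 \<le> card A"
  shows "\<exists>a b c. a\<in>A \<and> b\<in>A \<and> c\<in>A \<and> a<b \<and> b<c"
proof -
  obtain xs where xs: "sorted_wrt (<) xs" "set xs = A" "length xs = card A"
    using sorted_elems[OF assms] by blast
  have L: "3 \<le> length xs" using xs assms by simp
  show ?thesis
    apply (rule exI[of _ "xs!0"], rule exI[of _ "xs!1"], rule exI[of _ "xs!2"])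
    using L xs by (auto simp: sorted_wrt_nth_less)
qed


lemma critical_facts:
  assumes "critical (Av {Q1,Q2}) (m,n,S)"
  shows "\<not> tri S" "wf_bmat (m,n,S)"
    "\<And>i j. i\<in>{1..m} \<Longrightarrow> j\<in>{1..n} \<Longrightarrow> (i,j)\<notin>S \<Longrightarrow> tri (insert (i,j) S)"
proof -
  have A: "(m,n,S) \<in> Av {Q1,Q2}" using assms unfolding critical_def by simp
  then show "\<not> tri S" "wf_bmat (m,n,S)" using Av_iff by auto
  fix i j assume ij: "i\<in>{1..m}" "j\<in>{1..n}" "(i,j)\<notin>S"
  have "(m,n,insert (i,j) S) \<notin> Av {Q1,Q2}" using assms ij
    unfolding critical_def nrows_def ncols_def supp_def by auto
  moreover have "wf_bmat (m,n,insert (i,j) S)" using \<open>wf_bmat (m,n,S)\<close> ij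
    unfolding wf_bmat_def supp_def nrows_def ncols_def by auto
  ultimately show "tri (insert (i,j) S)" using Av_iff by blast
qed

lemma card_le_diff1:
  assumes "finite A" shows "card A \<le> card (A - {x}) + 1"
proof (cases "x \<in> A")
  case True
  then have "card A > 0" using assms card_gt_0_iff by blast
  then show ?thesis using True assms by (simp add: card_Diff_singleton_if)
qed simp

lemma row_bound:
  assumes "critical (Av {Q1,Q2}) (m,n,S)"
  shows "card {j \<in> {1..n}. (i, j) \<notin> S \<and> (j = 1 \<or> (i, j - 1) \<in> S)} \<le> 4"
proof (rule ccontr)
  let ?T = "{j \<in> {1..n}. (i, j) \<notin> S \<and> (j = 1 \<or> (i, j - 1) \<in> S)}"
  assume "\<not> ?thesis"
  then have "5 \<le> card ?T" by simp
  moreover have "card ?T \<le> card (?T - {1}) + 1"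
    by (rule card_le_diff1) simp
  ultimately have "4 \<le> card (?T - {1})" by simp
  then obtain j1 j2 j3 j4 where J: "j1 \<in> ?T - {1}" "j2 \<in> ?T - {1}" "j3 \<in> ?T - {1}" "j4 \<in> ?T - {1}"
    "j1<j2" "j2<j3" "j3<j4"
    using four_elems[of "?T - {1}"] by auto
  note cf = critical_facts[OF assms]
  have row: "\<And>j. j \<in> ?T - {1} \<Longrightarrow> (i,j-1)\<in>S \<and> (i,j)\<notin>S \<and> 2 \<le> j \<and> tri (insert (i,j) S)"
  proof -
    fix j assume j: "j \<in> ?T - {1}"
    then have "i \<in> {1..m}" using cf(2) unfolding wf_bmat_def supp_def nrows_def ncols_def by auto
    then show "(i,j-1)\<in>S \<and> (i,j)\<notin>S \<and> 2 \<le> j \<and> tri (insert (i,j) S)" using j cf(3)[of i j] by auto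
  qed
  have R1: "(i,j1-1)\<in>S" "2 \<le> j1" "tri (insert (i,j1-1+1) S)" using row[OF J(1)] by auto
  have R2: "(i,j2-1)\<in>S" "2 \<le> j2" using row[OF J(2)] by auto
  have R3: "(i,j3-1)\<in>S" "2 \<le> j3" "tri (insert (i,j3-1+1) S)" using row[OF J(3)] by auto
  have R4: "(i,j4-1)\<in>S" "2 \<le> j4" using row[OF J(4)] by auto
  have B1: "\<exists>a1 a2 b2. (a1,j1-1)\<in>S \<and> i<a1 \<and> (a2,b2)\<in>S \<and> i<a2 \<and> j1-1+1<b2 \<and> a1\<noteq>a2"
    using row_caseB[OF cf(1) R1(1) R1(3) R2(1)] J R1 R2 by simp
  have B3: "\<exists>a1 a2 b2. (a1,j3-1)\<in>S \<and> i<a1 \<and> (a2,b2)\<in>S \<and> i<a2 \<and> j3-1+1<b2 \<and> a1\<noteq>a2"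
    using row_caseB[OF cf(1) R3(1) R3(3) R4(1)] J R3 R4 by simp
  show False
    apply (rule row_three[OF cf(1) _ _ R2(1) B1 B3]) using J R1 R2 R3 R4 by auto
qed


lemma col_bound:
  assumes "critical (Av {Q1,Q2}) (m,n,S)"
  shows "card {i \<in> {1..m}. (i, j) \<notin> S \<and> (i = 1 \<or> (i - 1, j) \<in> S)} \<le> 4"
proof (rule ccontr)
  let ?T = "{i \<in> {1..m}. (i, j) \<notin> S \<and> (i = 1 \<or> (i - 1, j) \<in> S)}"
  assume "\<not> ?thesis"
  then have "5 \<le> card ?T" by simp
  moreover have "card ?T \<le> card (?T - {1}) + 1"
    by (rule card_le_diff1) simp
  ultimately have "3 \<le> card (?T - {1})" by simp
  then obtain i1 i2 i3 where J: "i1 \<in> ?T - {1}" "i2 \<in> ?T - {1}" "i3 \<in> ?T - {1}"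
    "i1<i2" "i2<i3"
    using three_elems[of "?T - {1}"] by auto
  note cf = critical_facts[OF assms]
  have col: "\<And>i. i \<in> ?T - {1} \<Longrightarrow> (i-1,j)\<in>S \<and> (i,j)\<notin>S \<and> 2 \<le> i \<and> tri (insert (i,j) S)"
  proof -
    fix i assume i: "i \<in> ?T - {1}"
    then have "j \<in> {1..n}" using cf(2) unfolding wf_bmat_def supp_def nrows_def ncols_def by auto
    then show "(i-1,j)\<in>S \<and> (i,j)\<notin>S \<and> 2 \<le> i \<and> tri (insert (i,j) S)" using i cf(3)[of i j] by auto
  qed
  have C1: "(i1-1,j)\<in>S" "(i1,j)\<notin>S" "1 \<le> i1" "tri (insert (i1,j) S)" using col[OF J(1)] by auto
  have C2: "(i2-1,j)\<in>S" using col[OF J(2)] by auto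
  have C3: "(i3-1,j)\<in>S" using col[OF J(3)] by auto
  have "i1 \<noteq> i2 - 1" "i1 \<noteq> i3 - 1" using C1 C2 C3 by auto
  then have "i1 < i2 - 1" "i1 < i3 - 1" "i2 - 1 \<noteq> i3 - 1" using J col[OF J(2)] col[OF J(3)] by auto
  then show False using col_no[OF cf(1) C1(1) C1(3) C1(4) C2 C3] by blast
qed

theorem proposition4p3:
  shows "bounded_class (Av {Q1, Q2})"
  unfolding bounded_class_def
proof (intro exI[of _ 4] allI impI conjI ballI)
  fix M :: bmat and i assume "critical (Av {Q1, Q2}) M"
  then show "row_complexity M i \<le> 4"
    using row_bound[of "nrows M" "ncols M" "supp M"]
    unfolding row_complexity_def nrows_def ncols_def supp_def by (cases M) auto
next
  fix M :: bmat and j assume "critical (Av {Q1, Q2}) M"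
  then show "col_complexity M j \<le> 4"
    using col_bound[of "nrows M" "ncols M" "supp M"]
    unfolding col_complexity_def nrows_def ncols_def supp_def by (cases M) auto
qed

end
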